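(* Let $G$ be a finite simple graph. Then $\mathrm{mur}(G)=0$ if and only if $G$ or its complement $\overline{G}$ is a complete graph.
   Context: For a finite simple undirected graph $G$ on vertices $v_1,\dots,v_n$, let $A_G$ be its $(0,1)$-adjacency matrix, $D_G=\mathrm{diag}(d_1,\dots,d_n)$ with $d_i$ the degree of $v_i$, $I$ the $n\times n$ identity matrix and $J$ the $n\times n$ all-ones matrix. A universal adjacency matrix of $G$ is any matrix $\alpha A_G+\beta I+\gamma J+\delta D_G$ with real scalars $\alpha,\beta,\gamma,\delta$ and $\alpha\neq 0$. The minimum universal rank $\mathrm{mur}(G)$ is the minimum rank over all universal adjacency matrices of $G$. *)

theory Defs
  imports "HOL-Analysis.Analysis"
begin

definition simple_graph :: "('n::finite \<Rightarrow> 'n \<Rightarrow> bool) \<Rightarrow> bool" where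
  "simple_graph E \<longleftrightarrow> (\<forall>i j. E i j \<longrightarrow> E j i) \<and> (\<forall>i. \<not> E i i)"

definition complete_graph :: "('n::finite \<Rightarrow> 'n \<Rightarrow> bool) \<Rightarrow> bool" where
  "complete_graph E \<longleftrightarrow> (\<forall>i j. i \<noteq> j \<longrightarrow> E i j)"

definition graph_complement :: "('n::finite \<Rightarrow> 'n \<Rightarrow> bool) \<Rightarrow> ('n \<Rightarrow> 'n \<Rightarrow> bool)" where
  "graph_complement E = (\<lambda>i j. i \<noteq> j \<and> \<not> E i j)"

definition adj_matrix :: "('n::finite \<Rightarrow> 'n \<Rightarrow> bool) \<Rightarrow> real^'n^'n" where
  "adj_matrix E = (\<chi> i j. if E i j then 1 else 0)"

definition degree :: "('n::finite \<Rightarrow> 'n \<Rightarrow> bool) \<Rightarrow> 'n \<Rightarrow> nat" where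
  "degree E i = card {j. E i j}"

definition deg_matrix :: "('n::finite \<Rightarrow> 'n \<Rightarrow> bool) \<Rightarrow> real^'n^'n" where
  "deg_matrix E = (\<chi> i j. if i = j then real (degree E i) else 0)"

definition ones_matrix :: "real^'n::finite^'n" where
  "ones_matrix = (\<chi> i j. 1)"

definition universal_adj ::
  "('n::finite \<Rightarrow> 'n \<Rightarrow> bool) \<Rightarrow> real \<Rightarrow> real \<Rightarrow> real \<Rightarrow> real \<Rightarrow> real^'n^'n" where
  "universal_adj E \<alpha> \<beta> \<gamma> \<delta> =
     \<alpha> *\<^sub>R adj_matrix E + \<beta> *\<^sub>R mat 1 + \<gamma> *\<^sub>R ones_matrix + \<delta> *\<^sub>R deg_matrix E"

text \<open>Minimum universal rank: minimum rank over all universal adjacency matrices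
  (with \<alpha> \<noteq> 0). The set of ranks is a nonempty set of naturals bounded by CARD('n).\<close>
definition mur :: "('n::finite \<Rightarrow> 'n \<Rightarrow> bool) \<Rightarrow> nat" where
  "mur E = Min {rank (universal_adj E \<alpha> \<beta> \<gamma> \<delta>) | \<alpha> \<beta> \<gamma> \<delta>. \<alpha> \<noteq> 0}"

end

theory Submission
  imports Defs
begin

lemma mur_zero_iff:
  fixes E :: "'n::finite \<Rightarrow> 'n \<Rightarrow> bool"
  shows "mur E = 0 \<longleftrightarrow> (\<exists>\<alpha> \<beta> \<gamma> \<delta>. \<alpha> \<noteq> 0 \<and> universal_adj E \<alpha> \<beta> \<gamma> \<delta> = 0)"
proof -
  define S where "S = {rank (universal_adj E \<alpha> \<beta> \<gamma> \<delta>) | \<alpha> \<beta> \<gamma> \<delta>. \<alpha> \<noteq> 0}"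
  have fin: "finite S"
  proof (rule finite_subset[of _ "{..CARD('n)}"])
    show "S \<subseteq> {..CARD('n)}" unfolding S_def using rank_bound
      by (smt (verit, best) atMost_iff mem_Collect_eq min.bounded_iff subsetI)
  qed auto
  have ne: "S \<noteq> {}" unfolding S_def by (metis (mono_tags, lifting) empty_Collect_eq one_neq_zero)
  have "mur E = Min S" unfolding mur_def S_def by simp
  also have "Min S = 0 \<longleftrightarrow> 0 \<in> S"
    using fin ne by (metis Min_in Min_le le_zero_eq)
  also have "\<dots> \<longleftrightarrow> (\<exists>\<alpha> \<beta> \<gamma> \<delta>. \<alpha> \<noteq> 0 \<and> universal_adj E \<alpha> \<beta> \<gamma> \<delta> = 0)"
    unfolding S_def using rank_eq_0 by (smt (verit) mem_Collect_eq)
  finally show ?thesis .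
qed

lemma entry:
  "universal_adj E \<alpha> \<beta> \<gamma> \<delta> $ i $ j =
   \<alpha> * (if E i j then 1 else 0) + \<beta> * (if i = j then 1 else 0) + \<gamma>
   + \<delta> * (if i = j then real (degree E i) else 0)"
  by (simp add: universal_adj_def adj_matrix_def ones_matrix_def deg_matrix_def mat_def)

theorem theorem2:
  fixes E :: "'n::finite \<Rightarrow> 'n \<Rightarrow> bool"
  assumes "simple_graph E"
  shows "mur E = 0 \<longleftrightarrow> complete_graph E \<or> complete_graph (graph_complement E)"
proof -
  have irr: "\<And>i. \<not> E i i" using assms by (simp add: simple_graph_def)
  show ?thesis
  proof
    assume "mur E = 0"
    then obtain \<alpha> \<beta> \<gamma> \<delta> where a: "\<alpha> \<noteq> 0" and z: "universal_adj E \<alpha> \<beta> \<gamma> \<delta> = 0"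
      using mur_zero_iff by blast
    have off: "\<And>i j. i \<noteq> j \<Longrightarrow> \<alpha> * (if E i j then 1 else 0) + \<gamma> = 0"
    proof -
      fix i j :: 'n assume "i \<noteq> j"
      have "universal_adj E \<alpha> \<beta> \<gamma> \<delta> $ i $ j = 0" using z by simp
      then show "\<alpha> * (if E i j then 1 else 0) + \<gamma> = 0" using \<open>i \<noteq> j\<close> by (simp add: entry)
    qed
    show "complete_graph E \<or> complete_graph (graph_complement E)"
    proof (rule ccontr)
      assume "\<not> ?thesis"
      then obtain i j k l where "i \<noteq> j" "\<not> E i j" "k \<noteq> l" "E k l"
        unfolding complete_graph_def graph_complement_def by blast
      then have "\<gamma> = 0" "\<alpha> + \<gamma> = 0" using off[of i j] off[of k l] by auto
      then show False using a by simp
    qed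
  next
    assume "complete_graph E \<or> complete_graph (graph_complement E)"
    then show "mur E = 0"
    proof
      assume c: "complete_graph E"
      have "universal_adj E 1 1 (-1) 0 = 0"
        using c irr by (simp add: vec_eq_iff entry complete_graph_def)
      then show ?thesis using mur_zero_iff by (metis one_neq_zero)
    next
      assume c: "complete_graph (graph_complement E)"
      have "universal_adj E 1 0 0 0 = 0"
        using c irr by (simp add: vec_eq_iff entry complete_graph_def graph_complement_def) metis
      then show ?thesis using mur_zero_iff by (metis one_neq_zero)
    qed
  qed
qed

end
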